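(* Let $G=(V,E)$ be an unweighted, undirected simple graph on $n$ vertices, accessed only through cut queries. After performing $n$ initial cut queries, one can sample an edge of $E$ uniformly at random using $O(\log n)$ additional cut queries. In particular, $k$ independent uniformly random edges can be drawn using $n+O(k\log n)$ cut queries in total.
   Context: A cut query takes a set $S\subseteq V$ and returns $c(S)$, the number of edges of $G$ with exactly one endpoint in $S$. *)

theory Defs
  imports "HOL-Probability.Probability"
begin

definition simple_graph :: "'v set \<Rightarrow> 'v set set \<Rightarrow> bool" where
  "simple_graph V E \<longleftrightarrow> (\<forall>e\<in>E. e \<subseteq> V \<and> card e = 2)"

definition cut :: "'v set set \<Rightarrow> 'v set \<Rightarrow> nat" where
  "cut E S = card {e \<in> E. card (e \<inter> S) = 1}"

text \<open>Randomized adaptive cut-query algorithms: a query asks a set S and branches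
  on the answer; a random step draws a value from a (graph-independent) distribution.\<close>
datatype ('v, 'a) qalg =
    Return 'a
  | Query "'v set" "nat \<Rightarrow> ('v, 'a) qalg"
  | Rand "nat pmf" "nat \<Rightarrow> ('v, 'a) qalg"

primrec run :: "('v set \<Rightarrow> nat) \<Rightarrow> ('v, 'a) qalg \<Rightarrow> 'a pmf" where
  "run c (Return x) = return_pmf x"
| "run c (Query S f) = run c (f (c S))"
| "run c (Rand p f) = bind_pmf p (\<lambda>r. run c (f r))"

primrec queries_le :: "('v set \<Rightarrow> nat) \<Rightarrow> ('v, 'a) qalg \<Rightarrow> nat \<Rightarrow> bool" where
  "queries_le c (Return x) N = True"
| "queries_le c (Query S f) N = (N > 0 \<and> queries_le c (f (c S)) (N - 1))"
| "queries_le c (Rand p f) N = (\<forall>r\<in>set_pmf p. queries_le c (f r) N)"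

primrec iid_pmf :: "nat \<Rightarrow> 'a pmf \<Rightarrow> 'a list pmf" where
  "iid_pmf 0 p = return_pmf []"
| "iid_pmf (Suc k) p = bind_pmf p (\<lambda>x. map_pmf (Cons x) (iid_pmf k p))"

end

theory Submission
  imports Defs
begin


primrec bindq :: "('v,'a) qalg \<Rightarrow> ('a \<Rightarrow> ('v,'b) qalg) \<Rightarrow> ('v,'b) qalg" where
  "bindq (Return x) f = f x"
| "bindq (Query S g) f = Query S (\<lambda>a. bindq (g a) f)"
| "bindq (Rand p g) f = Rand p (\<lambda>r. bindq (g r) f)"

lemma run_bindq: "run c (bindq A f) = bind_pmf (run c A) (\<lambda>x. run c (f x))"
  by (induction A) (auto simp: bind_return_pmf bind_assoc_pmf)

lemma queries_le_mono: "queries_le c A N \<Longrightarrow> N \<le> M \<Longrightarrow> queries_le c A M"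
proof (induction A arbitrary: N M)
  case (Query S g)
  then show ?case by auto
qed auto

lemma queries_bindq:
  "queries_le c A N \<Longrightarrow> (\<forall>x\<in>set_pmf (run c A). queries_le c (f x) M) \<Longrightarrow> queries_le c (bindq A f) (N+M)"
proof (induction A arbitrary: N)
  case (Query S g)
  then show ?case by (cases N) auto
qed (auto elim: queries_le_mono)

primrec collect :: "'v set list \<Rightarrow> (nat list \<Rightarrow> ('v,'a) qalg) \<Rightarrow> ('v,'a) qalg" where
  "collect [] k = k []"
| "collect (S#Ss) k = Query S (\<lambda>a. collect Ss (\<lambda>l. k (a#l)))"

lemma run_collect: "run c (collect Ss k) = run c (k (map c Ss))"
  by (induction Ss arbitrary: k) auto

lemma queries_collect: "queries_le c (k (map c Ss)) N \<Longrightarrow> queries_le c (collect Ss k) (length Ss + N)"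
  by (induction Ss arbitrary: k) auto

primrec samples :: "nat \<Rightarrow> ('v,'a) qalg \<Rightarrow> ('v,'a list) qalg" where
  "samples 0 B = Return []"
| "samples (Suc k) B = bindq B (\<lambda>x. bindq (samples k B) (\<lambda>xs. Return (x#xs)))"

lemma run_samples: "run c B = p \<Longrightarrow> run c (samples k B) = iid_pmf k p"
  by (induction k) (auto simp: run_bindq map_pmf_def)

lemma queries_samples: "queries_le c B M \<Longrightarrow> queries_le c (samples k B) (k*M)"
proof (induction k)
  case 0 then show ?case by simp
next
  case (Suc k)
  have "queries_le c (bindq (samples k B) (\<lambda>xs. Return (x#xs))) (k*M+0)" for x
    by (rule queries_bindq) (use Suc in auto)
  then show ?case using Suc by (auto intro!: queries_bindq[where N=M and M="k*M", simplified add.commute] simp: add.commute)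
qed



definition nb :: "nat set set \<Rightarrow> nat \<Rightarrow> nat set" where
  "nb E v = {u. {v,u} \<in> E}"

lemma two_set: "card e = 2 \<Longrightarrow> \<exists>x y. x \<noteq> y \<and> e = {x,y}"
  by (auto simp: card_2_iff)

lemma sg_edge: "simple_graph V E \<Longrightarrow> e \<in> E \<Longrightarrow> e \<subseteq> V \<and> card e = 2"
  by (simp add: simple_graph_def)

lemma nb_props:
  assumes "simple_graph {..<n} E"
  shows "nb E v \<subseteq> {..<n}" "v \<notin> nb E v" "finite (nb E v)"
proof -
  show 1: "nb E v \<subseteq> {..<n}"
  proof
    fix u assume "u \<in> nb E v"
    hence "{v,u} \<in> E" by (simp add: nb_def)
    hence "{v,u} \<subseteq> {..<n}" using sg_edge[OF assms] by blast
    thus "u \<in> {..<n}" by simp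
  qed
  show "v \<notin> nb E v"
  proof
    assume "v \<in> nb E v"
    hence "{v} \<in> E" by (simp add: nb_def)
    hence "card {v} = 2" using sg_edge[OF assms] by blast
    thus False by simp
  qed
  show "finite (nb E v)" by (rule finite_subset[OF 1]) simp
qed

lemma finite_E: "simple_graph {..<(n::nat)} E \<Longrightarrow> finite E"
proof -
  assume "simple_graph {..<n} E"
  hence "E \<subseteq> Pow {..<n}" by (auto simp: simple_graph_def)
  thus ?thesis by (rule finite_subset) simp
qed

lemma card_nb_filter:
  assumes "simple_graph {..<n} E"
  shows "card {u\<in>nb E v. P {v,u}} = card {e\<in>E. v\<in>e \<and> P e}"
proof -
  have inj: "inj_on (\<lambda>u. {v,u}) {u\<in>nb E v. P {v,u}}"
    using nb_props(2)[OF assms, of v] by (auto simp: inj_on_def doubleton_eq_iff)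
  have "(\<lambda>u. {v,u}) ` {u\<in>nb E v. P {v,u}} = {e\<in>E. v\<in>e \<and> P e}"
  proof
    show "(\<lambda>u. {v,u}) ` {u\<in>nb E v. P {v,u}} \<subseteq> {e\<in>E. v\<in>e \<and> P e}" by (auto simp: nb_def)
  next
    show "{e\<in>E. v\<in>e \<and> P e} \<subseteq> (\<lambda>u. {v,u}) ` {u\<in>nb E v. P {v,u}}"
    proof
      fix e assume e: "e \<in> {e\<in>E. v\<in>e \<and> P e}"
      have "card e = 2" using e sg_edge[OF assms] by blast
      then obtain x y where xy: "x\<noteq>y" "e={x,y}" using two_set by blast
      show "e \<in> (\<lambda>u. {v,u}) ` {u\<in>nb E v. P {v,u}}"
      proof (cases "v = x")
        case True thus ?thesis using e xy by (auto simp: nb_def)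
      next
        case False thus ?thesis using e xy by (auto simp: nb_def insert_commute intro!: image_eqI[where x=x])
      qed
    qed
  qed
  thus ?thesis using card_image[OF inj] by simp
qed

lemma cut_single: "cut E {v} = card {e\<in>E. v\<in>e}"
proof -
  have "card (e \<inter> {v}) = 1 \<longleftrightarrow> v \<in> e" for e by (cases "v\<in>e") auto
  thus ?thesis by (simp add: cut_def)
qed

lemma card_nb: "simple_graph {..<n} E \<Longrightarrow> card (nb E v) = cut E {v}"
  using card_nb_filter[of n E v "\<lambda>_. True"] by (simp add: cut_single)

lemma card_filter_sum: "finite A \<Longrightarrow> card {x\<in>A. P x} = (\<Sum>x\<in>A. if P x then 1 else 0 :: nat)"
  by (simp add: sum.If_cases Int_def conj_commute)

lemma card_pair_int: "x \<noteq> y \<Longrightarrow> card ({x,y} \<inter> S) = (if x\<in>S then 1 else 0) + (if y\<in>S then 1 else 0)"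
  by (cases "x \<in> S"; cases "y \<in> S") (simp_all add: Int_insert_left)

lemma edge_ident:
  assumes "card e = 2" "v \<notin> T"
  shows "(if card (e \<inter> insert v T) = 1 then 1 else 0) + 2 * (if v \<in> e \<and> card (e \<inter> T) = 1 then 1 else 0)
       = (if card (e \<inter> T) = 1 then 1 else 0) + (if v \<in> e then 1 else (0::nat))"
proof -
  obtain x y where xy: "x\<noteq>y" "e={x,y}" using two_set[OF assms(1)] by blast
  have "x \<in> e" "y \<in> e" using xy by auto
  show ?thesis unfolding xy(2) card_pair_int[OF xy(1)] using xy(1) assms(2)
    by (cases "x \<in> T"; cases "y \<in> T"; cases "v = x"; cases "v = y") simp_all
qed

lemma cut_ident:
  assumes g: "simple_graph {..<n} E" and v: "v \<notin> T"
  shows "cut E (insert v T) + 2 * card (nb E v \<inter> T) = cut E T + cut E {v}"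
proof -
  have fE: "finite E" using finite_E[OF g] .
  have "nb E v \<inter> T = {u\<in>nb E v. card ({v,u} \<inter> T) = 1}"
    using v nb_props(2)[OF g, of v] by (auto simp: Int_insert_left split: if_splits)
  hence c: "card (nb E v \<inter> T) = card {e\<in>E. v\<in>e \<and> card (e \<inter> T) = 1}"
    using card_nb_filter[OF g, of v "\<lambda>e. card (e \<inter> T) = 1"] by simp
  have "cut E (insert v T) + 2 * card {e\<in>E. v\<in>e \<and> card (e \<inter> T) = 1}
      = (\<Sum>e\<in>E. (if card (e \<inter> insert v T) = 1 then 1 else 0) + 2 * (if v \<in> e \<and> card (e \<inter> T) = 1 then 1 else 0))"
    by (simp add: cut_def card_filter_sum[OF fE] sum.distrib sum_distrib_left)
  also have "\<dots> = (\<Sum>e\<in>E. (if card (e \<inter> T) = 1 then 1 else 0) + (if v \<in> e then 1 else (0::nat)))"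
    using g v sg_edge[OF g] by (intro sum.cong refl edge_ident) auto
  also have "\<dots> = cut E T + card {e\<in>E. v\<in>e}"
    by (simp add: cut_def card_filter_sum[OF fE] sum.distrib)
  also have "\<dots> = cut E T + cut E {v}" by (simp add: cut_single)
  finally show ?thesis using c by simp
qed



primrec sq :: "nat \<Rightarrow> nat \<Rightarrow> nat \<Rightarrow> nat \<Rightarrow> nat \<Rightarrow> nat \<Rightarrow> (nat, nat) qalg" where
  "sq v dv 0 a b j = Return a"
| "sq v dv (Suc t) a b j = (if b \<le> Suc a then Return a else
    Query ({a..<(a+b) div 2} - {v}) (\<lambda>c1. Query (insert v ({a..<(a+b) div 2} - {v})) (\<lambda>c2.
      if j < (dv + c1 - c2) div 2 then sq v dv t a ((a+b) div 2) j
      else sq v dv t ((a+b) div 2) b (j - (dv + c1 - c2) div 2))))"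

lemma queries_sq: "queries_le c (sq v dv t a b j) (2*t)"
  by (induction t arbitrary: a b j) auto

lemma card_split: "finite N \<Longrightarrow> (a::nat) \<le> m \<Longrightarrow> m \<le> b \<Longrightarrow>
  card (N \<inter> {a..<b}) = card (N \<inter> {a..<m}) + card (N \<inter> {m..<b})"
proof -
  assume f: "finite N" and am: "a \<le> m" and mb: "m \<le> b"
  have "N \<inter> {a..<b} = (N \<inter> {a..<m}) \<union> (N \<inter> {m..<b})" using am mb by auto
  moreover have "(N \<inter> {a..<m}) \<inter> (N \<inter> {m..<b}) = {}" by auto
  ultimately show ?thesis using f by (simp add: card_Un_disjoint)
qed

lemma sq_correct:
  assumes g: "simple_graph {..<n} E" and dv: "dv = cut E {v}"
  shows "b - a \<le> 2^t \<Longrightarrow> j < card (nb E v \<inter> {a..<b}) \<Longrightarrow>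
    \<exists>x. run (cut E) (sq v dv t a b j) = return_pmf x \<and> x \<in> nb E v \<inter> {a..<b}
        \<and> card (nb E v \<inter> {a..<x}) = j"
proof (induction t arbitrary: a b j)
  case 0
  have "{a..<b} \<subseteq> {a}" using 0(1) by auto
  hence sub: "nb E v \<inter> {a..<b} \<subseteq> {a}" by blast
  have ne: "nb E v \<inter> {a..<b} \<noteq> {}" using 0(2) by auto
  hence "nb E v \<inter> {a..<b} = {a}" using sub by blast
  hence "j = 0" "a \<in> nb E v \<inter> {a..<b}" using 0(2) by auto
  thus ?case by simp
next
  case (Suc t)
  show ?case
  proof (cases "b \<le> Suc a")
    case True
    have "{a..<b} \<subseteq> {a}" using True by auto
    hence sub: "nb E v \<inter> {a..<b} \<subseteq> {a}" by blast
    have ne: "nb E v \<inter> {a..<b} \<noteq> {}" using Suc(3) by auto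
    hence "nb E v \<inter> {a..<b} = {a}" using sub by blast
    hence "j = 0" "a \<in> nb E v \<inter> {a..<b}" using Suc(3) by auto
    thus ?thesis using True by simp
  next
    case False
    define m where "m = (a+b) div 2"
    define T where "T = {a..<m} - {v}"
    define N where "N = nb E v"
    have fN: "finite N" using nb_props(3)[OF g] by (simp add: N_def)
    have vN: "v \<notin> N" using nb_props(2)[OF g] by (simp add: N_def)
    have am: "a < m" "m < b" using False by (auto simp: m_def)
    have lens: "m - a \<le> 2^t" "b - m \<le> 2^t" using Suc(2) False by (auto simp: m_def)
    have vT: "v \<notin> T" by (simp add: T_def)
    have ci: "cut E (insert v T) + 2 * card (N \<inter> T) = cut E T + dv"
      using cut_ident[OF g vT] dv by (simp add: N_def)
    have NT: "N \<inter> T = N \<inter> {a..<m}" using vN by (auto simp: T_def)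
    define cl where "cl = card (N \<inter> {a..<m})"
    have clv: "(dv + cut E T - cut E (insert v T)) div 2 = cl"
      using ci NT by (simp add: cl_def)
    have spl: "card (N \<inter> {a..<b}) = cl + card (N \<inter> {m..<b})"
      using card_split[OF fN, of a m b] am by (simp add: cl_def)
    have run_eq: "run (cut E) (sq v dv (Suc t) a b j) =
       run (cut E) (if j < cl then sq v dv t a m j else sq v dv t m b (j - cl))"
      using False clv by (simp add: m_def[symmetric] T_def[symmetric] Let_def)
    show ?thesis
    proof (cases "j < cl")
      case True
      obtain x where x: "run (cut E) (sq v dv t a m j) = return_pmf x" "x \<in> N \<inter> {a..<m}"
          "card (N \<inter> {a..<x}) = j"
        using Suc.IH[OF lens(1), of j] True by (auto simp: cl_def N_def)
      thus ?thesis using run_eq True am by (auto simp: N_def)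
    next
      case False
      have "j - cl < card (N \<inter> {m..<b})" using Suc(3) spl False by (simp add: N_def)
      then obtain x where x: "run (cut E) (sq v dv t m b (j - cl)) = return_pmf x" "x \<in> N \<inter> {m..<b}"
          "card (N \<inter> {m..<x}) = j - cl"
        using Suc.IH[OF lens(2), of "j - cl"] by (auto simp: N_def)
      have "card (N \<inter> {a..<x}) = cl + card (N \<inter> {m..<x})"
        using card_split[OF fN, of a m x] am x(2) by (simp add: cl_def)
      hence "card (N \<inter> {a..<x}) = j" using x(3) False by simp
      thus ?thesis using run_eq False am x by (auto simp: N_def)
    qed
  qed
qed



lemma count_deg:
  assumes g: "simple_graph {..<(n::nat)} E" and e: "e \<in> E"
  shows "(\<Sum>v<n. if v \<in> e then 1 else 0::nat) = 2"
proof -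
  have "e \<subseteq> {..<n}" "card e = 2" using sg_edge[OF g e] by auto
  moreover have "{v\<in>{..<n}. v \<in> e} = e" using calculation by auto
  moreover have "card {v\<in>{..<n}. v \<in> e} = (\<Sum>v<n. if v \<in> e then 1 else 0::nat)"
    by (rule card_filter_sum) simp
  ultimately show ?thesis by simp
qed

lemma sum_deg:
  assumes g: "simple_graph {..<n} E"
  shows "(\<Sum>v<n. card (nb E v)) = 2 * card E"
proof -
  have fE: "finite E" using finite_E[OF g] .
  have "(\<Sum>v<n. card (nb E v)) = (\<Sum>v<n. \<Sum>e\<in>E. if v \<in> e then 1 else 0::nat)"
    by (intro sum.cong refl) (simp add: card_nb[OF g] cut_single card_filter_sum[OF fE])
  also have "\<dots> = (\<Sum>e\<in>E. \<Sum>v<n. if v \<in> e then 1 else 0::nat)" by (rule sum.swap)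
  also have "\<dots> = (\<Sum>e\<in>E. 2)" using count_deg[OF g] by simp
  finally show ?thesis by simp
qed

lemma pmf_nb_map:
  assumes g: "simple_graph {..<n} E" and ne: "nb E v \<noteq> {}"
  shows "pmf (map_pmf (\<lambda>u. {v,u}) (pmf_of_set (nb E v))) e
       = (if e \<in> E \<and> v \<in> e then 1 else 0) / real (card (nb E v))"
proof -
  have fN: "finite (nb E v)" using nb_props(3)[OF g] .
  have "pmf (map_pmf (\<lambda>u. {v,u}) (pmf_of_set (nb E v))) e
      = real (card (nb E v \<inter> (\<lambda>u. {v,u}) -` {e})) / real (card (nb E v))"
    using fN ne by (simp add: pmf_map measure_pmf_of_set)
  also have "nb E v \<inter> (\<lambda>u. {v,u}) -` {e} = {u\<in>nb E v. {v,u} = e}" by auto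
  also have "card \<dots> = card {e'\<in>E. v \<in> e' \<and> e' = e}" by (rule card_nb_filter[OF g])
  also have "{e'\<in>E. v \<in> e' \<and> e' = e} = (if e \<in> E \<and> v \<in> e then {e} else {})" by auto
  finally show ?thesis by simp
qed

definition Mv :: "nat \<Rightarrow> (nat \<Rightarrow> nat) \<Rightarrow> nat multiset" where
  "Mv n d = (\<Sum>v\<in>{..<n}. replicate_mset (d v) v)"

lemma count_Mv: "count (Mv n d) x = (if x < n then d x else 0)"
  by (simp add: Mv_def count_sum)

lemma size_Mv: "size (Mv n d) = (\<Sum>v<n. d v)"
  by (simp add: Mv_def size_multiset_sum)

lemma mix:
  assumes g: "simple_graph {..<n} E" and ne: "E \<noteq> {}"
  defines "M \<equiv> Mv n (\<lambda>v. card (nb E v))"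
  shows "bind_pmf (pmf_of_multiset M) (\<lambda>v. map_pmf (\<lambda>u. {v,u}) (pmf_of_set (nb E v))) = pmf_of_set E"
proof (rule pmf_eqI)
  fix e
  have fE: "finite E" using finite_E[OF g] .
  have cE: "card E > 0" using fE ne by (simp add: card_gt_0_iff)
  have sz: "size M = 2 * card E" using sum_deg[OF g] by (simp add: M_def size_Mv)
  hence Mne: "M \<noteq> {#}" using cE by auto
  have pM: "pmf (pmf_of_multiset M) v = (if v < n then card (nb E v) else 0) / (2 * card E)" for v
    using Mne sz by (simp add: pmf_of_multiset M_def count_Mv)
  have supp: "set_pmf (pmf_of_multiset M) \<subseteq> {..<n}"
  proof
    fix x assume "x \<in> set_pmf (pmf_of_multiset M)"
    hence "count M x > 0" using Mne by (simp add: set_pmf_of_multiset)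
    thus "x \<in> {..<n}" by (simp add: M_def count_Mv split: if_splits)
  qed
  have tm: "pmf (map_pmf (\<lambda>u. {v,u}) (pmf_of_set (nb E v))) e * pmf (pmf_of_multiset M) v
      = (if e \<in> E \<and> v \<in> e then 1 else 0) / (2 * card E)" if v: "v < n" for v
  proof (cases "nb E v = {}")
    case True
    have "card {e\<in>E. v \<in> e} = 0" using card_nb[OF g, of v] True by (simp add: cut_single)
    hence "\<not> (e \<in> E \<and> v \<in> e)" using fE by auto
    thus ?thesis using pM True by auto
  next
    case False
    have "card (nb E v) > 0" using False nb_props(3)[OF g] by (simp add: card_gt_0_iff)
    thus ?thesis using pmf_nb_map[OF g False] pM v by simp
  qed
  have "pmf (bind_pmf (pmf_of_multiset M) (\<lambda>v. map_pmf (\<lambda>u. {v,u}) (pmf_of_set (nb E v)))) e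
     = (\<Sum>v<n. pmf (map_pmf (\<lambda>u. {v,u}) (pmf_of_set (nb E v))) e * pmf (pmf_of_multiset M) v)"
    unfolding pmf_bind using supp by (intro integral_measure_pmf_real) auto
  also have "\<dots> = (\<Sum>v<n. (if e \<in> E \<and> v \<in> e then 1 else 0) / (2 * card E))"
    using tm by simp
  also have "\<dots> = real (\<Sum>v<n. if e \<in> E \<and> v \<in> e then 1 else 0::nat) / (2 * card E)"
    by (simp add: sum_divide_distrib[symmetric] of_nat_sum) (intro disjI2 sum.cong refl, simp)
  also have "(\<Sum>v<n. if e \<in> E \<and> v \<in> e then 1 else 0::nat) = (if e \<in> E then 2 else 0)"
    using count_deg[OF g] by auto
  also have "real (if e \<in> E then 2 else 0) / (2 * card E) = pmf (pmf_of_set E) e"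
    using fE ne by (simp add: indicator_def)
  finally show "pmf (bind_pmf (pmf_of_multiset M) (\<lambda>v. map_pmf (\<lambda>u. {v,u}) (pmf_of_set (nb E v)))) e
     = pmf (pmf_of_set E) e" .
qed



definition one :: "nat \<Rightarrow> nat \<Rightarrow> nat list \<Rightarrow> (nat, nat set) qalg" where
  "one n t ds = Rand (pmf_of_multiset (Mv n (\<lambda>v. ds!v)))
     (\<lambda>v. Rand (pmf_of_set {..<ds!v}) (\<lambda>j. bindq (sq v (ds!v) t 0 n j) (\<lambda>u. Return {v,u})))"

lemma queries_one: "queries_le c (one n t ds) (2*t)"
proof -
  have "queries_le c (bindq (sq v dv t a b j) (\<lambda>u. Return {v,u})) (2*t+0)" for v dv a b j
    by (rule queries_bindq[OF queries_sq]) simp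
  thus ?thesis unfolding one_def by simp
qed

lemma inner:
  assumes g: "simple_graph {..<n} E" and v: "v < n" and d: "card (nb E v) > 0"
    and t: "n \<le> 2^t"
  shows "bind_pmf (pmf_of_set {..<card (nb E v)})
           (\<lambda>j. run (cut E) (bindq (sq v (cut E {v}) t 0 n j) (\<lambda>u. Return {v,u})))
         = map_pmf (\<lambda>u. {v,u}) (pmf_of_set (nb E v))"
proof -
  define N where "N = nb E v"
  define d where "d = card N"
  have Nsub: "N \<subseteq> {..<n}" using nb_props(1)[OF g] by (simp add: N_def)
  have NI: "N \<inter> {0..<n} = N" using Nsub by auto
  define P where "P j x \<longleftrightarrow> run (cut E) (sq v (cut E {v}) t 0 n j) = return_pmf x \<and> x \<in> N \<inter> {0..<n}
      \<and> card (N \<inter> {0..<x}) = j" for j x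
  define f where "f j = (SOME x. P j x)" for j
  have Pf: "P j (f j)" if "j < d" for j
  proof -
    have "\<exists>x. P j x" unfolding P_def N_def
      by (rule sq_correct[OF g refl]) (use t that NI in \<open>auto simp: d_def N_def\<close>)
    thus ?thesis unfolding f_def by (rule someI_ex)
  qed
  have runj: "run (cut E) (bindq (sq v (cut E {v}) t 0 n j) (\<lambda>u. Return {v,u})) = return_pmf {v, f j}"
    if "j < d" for j
    using Pf[OF that] by (simp add: P_def run_bindq bind_return_pmf)
  have inj: "inj_on f {..<d}"
  proof (rule inj_onI)
    fix i j assume "i \<in> {..<d}" "j \<in> {..<d}" "f i = f j"
    thus "i = j" using Pf[of i] Pf[of j] by (auto simp: P_def)
  qed
  have img: "f ` {..<d} = N"
  proof (rule card_subset_eq)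
    show "finite N" using nb_props(3)[OF g] by (simp add: N_def)
    show "f ` {..<d} \<subseteq> N" using Pf by (auto simp: P_def)
    show "card (f ` {..<d}) = card N" using card_image[OF inj] by (simp add: d_def)
  qed
  have dpos: "{..<d} \<noteq> {}" using d by (auto simp: d_def N_def)
  have "bind_pmf (pmf_of_set {..<d})
           (\<lambda>j. run (cut E) (bindq (sq v (cut E {v}) t 0 n j) (\<lambda>u. Return {v,u})))
      = bind_pmf (pmf_of_set {..<d}) (\<lambda>j. return_pmf {v, f j})"
    using dpos by (intro bind_pmf_cong refl) (auto simp: runj)
  also have "\<dots> = map_pmf (\<lambda>u. {v,u}) (map_pmf f (pmf_of_set {..<d}))"
    by (simp add: map_pmf_def bind_assoc_pmf bind_return_pmf)
  also have "map_pmf f (pmf_of_set {..<d}) = pmf_of_set N"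
    using map_pmf_of_set_inj[OF inj dpos] img by simp
  finally show ?thesis by (simp add: N_def d_def)
qed

lemma run_one:
  assumes g: "simple_graph {..<n} E" and ne: "E \<noteq> {}" and t: "n \<le> 2^t"
  shows "run (cut E) (one n t (map (\<lambda>v. cut E {v}) [0..<n])) = pmf_of_set E"
proof -
  define ds where "ds = map (\<lambda>v. cut E {v}) [0..<n]"
  define M where "M = Mv n (\<lambda>v. card (nb E v))"
  have dsv: "ds ! v = card (nb E v)" if "v < n" for v
    using that card_nb[OF g] by (simp add: ds_def)
  have MM: "Mv n (\<lambda>v. ds!v) = M" unfolding M_def Mv_def
    by (intro sum.cong refl) (simp add: dsv)
  have fE: "finite E" using finite_E[OF g] .
  have sz: "size M = 2 * card E" using sum_deg[OF g] by (simp add: M_def size_Mv)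
  hence Mne: "M \<noteq> {#}" using fE ne by (auto simp: card_gt_0_iff)
  have "run (cut E) (one n t ds) = bind_pmf (pmf_of_multiset M)
     (\<lambda>v. bind_pmf (pmf_of_set {..<ds!v}) (\<lambda>j. run (cut E) (bindq (sq v (ds!v) t 0 n j) (\<lambda>u. Return {v,u}))))"
    by (simp add: one_def MM)
  also have "\<dots> = bind_pmf (pmf_of_multiset M) (\<lambda>v. map_pmf (\<lambda>u. {v,u}) (pmf_of_set (nb E v)))"
  proof (intro bind_pmf_cong refl)
    fix v assume "v \<in> set_pmf (pmf_of_multiset M)"
    hence "count M v > 0" using Mne by (simp add: set_pmf_of_multiset)
    hence v: "v < n" and dp: "card (nb E v) > 0" by (auto simp: M_def count_Mv split: if_splits)
    have "ds ! v = cut E {v}" using v by (simp add: ds_def)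
    moreover have "ds ! v = card (nb E v)" using dsv[OF v] .
    ultimately show "bind_pmf (pmf_of_set {..<ds!v}) (\<lambda>j. run (cut E) (bindq (sq v (ds!v) t 0 n j) (\<lambda>u. Return {v,u})))
       = map_pmf (\<lambda>u. {v,u}) (pmf_of_set (nb E v))"
      using inner[OF g v dp t] by metis
  qed
  also have "\<dots> = pmf_of_set E" using mix[OF g ne] by (simp add: M_def)
  finally show ?thesis by (simp add: ds_def)
qed

lemma log_bounds:
  assumes n: "(n::nat) \<ge> 2"
  shows "n \<le> 2 ^ nat \<lceil>log 2 (real n)\<rceil>" "real (nat \<lceil>log 2 (real n)\<rceil>) \<le> 2 * log 2 (real n)"
proof -
  have l1: "log 2 (real n) \<ge> 1" using n by simp
  have "real n = 2 powr (log 2 (real n))" using n by simp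
  also have "\<dots> \<le> 2 powr (real (nat \<lceil>log 2 (real n)\<rceil>))"
    by (intro powr_mono) (use l1 in linarith)+
  also have "\<dots> = 2 ^ nat \<lceil>log 2 (real n)\<rceil>" by (simp add: powr_realpow)
  finally show "n \<le> 2 ^ nat \<lceil>log 2 (real n)\<rceil>" by (metis of_nat_le_iff of_nat_numeral of_nat_power)
  have "real (nat \<lceil>log 2 (real n)\<rceil>) \<le> log 2 (real n) + 1" using l1 by linarith
  thus "real (nat \<lceil>log 2 (real n)\<rceil>) \<le> 2 * log 2 (real n)" using l1 by linarith
qed

theorem mainTheorem4:
  "\<exists>C::real. C > 0 \<and>
     (\<forall>n::nat. n \<ge> 2 \<longrightarrow> (\<forall>k::nat. k \<ge> 1 \<longrightarrow>
       (\<exists>A :: (nat, nat set list) qalg.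
          \<forall>E :: nat set set. simple_graph {..<n} E \<and> E \<noteq> {} \<longrightarrow>
             run (cut E) A = iid_pmf k (pmf_of_set E) \<and>
             queries_le (cut E) A (n + nat \<lceil>C * real k * log 2 (real n)\<rceil>))))"
proof (intro exI[of _ 4] conjI allI impI)
  fix n k :: nat assume n: "n \<ge> 2" and k: "k \<ge> 1"
  define t where "t = nat \<lceil>log 2 (real n)\<rceil>"
  have t1: "n \<le> 2^t" and t2: "real t \<le> 2 * log 2 (real n)" using log_bounds[OF n] by (simp_all add: t_def)
  have kt: "k * (2*t) \<le> nat \<lceil>4 * real k * log 2 (real n)\<rceil>"
  proof -
    have "real (k * (2*t)) = 2 * real k * real t" by simp
    also have "\<dots> \<le> 2 * real k * (2 * log 2 (real n))" using t2 by (intro mult_left_mono) auto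
    also have "\<dots> \<le> real_of_int \<lceil>4 * real k * log 2 (real n)\<rceil>" by linarith
    finally show ?thesis by linarith
  qed
  define A where "A = collect (map (\<lambda>v. {v}) [0..<n]) (\<lambda>ds. samples k (one n t ds))"
  show "\<exists>A :: (nat, nat set list) qalg.
          \<forall>E :: nat set set. simple_graph {..<n} E \<and> E \<noteq> {} \<longrightarrow>
             run (cut E) A = iid_pmf k (pmf_of_set E) \<and>
             queries_le (cut E) A (n + nat \<lceil>4 * real k * log 2 (real n)\<rceil>)"
  proof (intro exI[of _ A] allI impI conjI)
    fix E :: "nat set set" assume gE: "simple_graph {..<n} E \<and> E \<noteq> {}"
    have mm: "map (cut E) (map (\<lambda>v. {v}) [0..<n]) = map (\<lambda>v. cut E {v}) [0..<n]" by simp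
    show "run (cut E) A = iid_pmf k (pmf_of_set E)"
      unfolding A_def run_collect mm
      by (rule run_samples) (use run_one[OF _ _ t1] gE in auto)
    have "queries_le (cut E) A (length (map (\<lambda>v. {v}) [0..<n]) + k * (2*t))"
      unfolding A_def by (rule queries_collect) (rule queries_samples[OF queries_one])
    thus "queries_le (cut E) A (n + nat \<lceil>4 * real k * log 2 (real n)\<rceil>)"
      by (rule queries_le_mono) (use kt in simp)
  qed
qed (simp)

end
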